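(* Let $\delta\in(0,1)$ and $\lambda_0\in(0,\pi)$. Let $\{U_t,t\in\mathbb{Z}\}$ be a zero-mean weakly stationary process with autocovariance $\gamma_U$ satisfying $\sum_{h\in\mathbb{Z}}|\gamma_U(h)|<\infty$ and with spectral density $f_U$ which is continuous on $[0,\pi]$ and satisfies $\inf_{\lambda\in[0,\pi]}f_U(\lambda)>0$. Let $\{X_{t,\delta},t\in\mathbb{Z}\}$ be a zero-mean weakly stationary process with spectral density $$f_\delta(\lambda)=\frac{f_U(\lambda)}{|1-(1-\delta)e^{-i(\lambda-\lambda_0)}|^{2}\,|1-(1-\delta)e^{-i(\lambda+\lambda_0)}|^{2}},\qquad \lambda\in\mathbb{R}.$$ Given $X_{1,\delta},\dots,X_{n,\delta}$, let $N=\lfloor n/2\rfloor$, $\mathcal{G}(n)=\{-N,\dots,-1,1,\dots,N\}$, $\lambda_{j,n}=2\pi j/n$, $$I_{n,\delta}(\lambda)=\frac{1}{2\pi n}\Big|\sum_{t=1}^nX_{t,\delta}e^{-i\lambda t}\Big|^2,\quad \widehat\gamma_\delta(h)=\frac{2\pi}{n}\sum_{j\in\mathcal{G}(n)}I_{n,\delta}(\lambda_{j,n})\cos(\lambda_{j,n}h),\quad \widetilde\gamma_\delta(h)=\frac1n\sum_{t=1}^{n-|h|}X_{t,\delta}X_{t+|h|,\delta}.$$ Then for any $|h|<n$, $$\widehat\gamma_\delta(h)=\widetilde\gamma_\delta(h)+O_P(n^{-1}\delta^{-2}).$$ *)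

theory Defs
  imports "HOL-Probability.Probability"
begin

definition weakly_stationary :: "'a measure \<Rightarrow> (int \<Rightarrow> 'a \<Rightarrow> real) \<Rightarrow> bool" where
  "weakly_stationary M X \<longleftrightarrow> prob_space M \<and>
     (\<forall>t. X t \<in> borel_measurable M \<and> integrable M (\<lambda>\<omega>. (X t \<omega>)^2) \<and> (\<integral>\<omega>. X t \<omega> \<partial>M) = 0) \<and>
     (\<forall>t h. (\<integral>\<omega>. X t \<omega> * X (t + h) \<omega> \<partial>M) = (\<integral>\<omega>. X 0 \<omega> * X h \<omega> \<partial>M))"

definition autocov :: "'a measure \<Rightarrow> (int \<Rightarrow> 'a \<Rightarrow> real) \<Rightarrow> int \<Rightarrow> real" where
  "autocov M X h = (\<integral>\<omega>. X 0 \<omega> * X h \<omega> \<partial>M)"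

definition spectral_density :: "(int \<Rightarrow> real) \<Rightarrow> (real \<Rightarrow> real) \<Rightarrow> bool" where
  "spectral_density \<gamma> f \<longleftrightarrow>
     (\<forall>h. ((\<lambda>l. cis (of_int h * l) * complex_of_real (f l)) has_integral complex_of_real (\<gamma> h)) {-pi..pi})"

definition f_delta :: "(real \<Rightarrow> real) \<Rightarrow> real \<Rightarrow> real \<Rightarrow> real \<Rightarrow> real" where
  "f_delta fU lam0 \<delta> l = fU l /
     ((cmod (1 - complex_of_real (1 - \<delta>) * cis (- (l - lam0))))^2 *
      (cmod (1 - complex_of_real (1 - \<delta>) * cis (- (l + lam0))))^2)"

definition periodogram :: "nat \<Rightarrow> (int \<Rightarrow> 'a \<Rightarrow> real) \<Rightarrow> 'a \<Rightarrow> real \<Rightarrow> real" where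
  "periodogram n X \<omega> l =
     (cmod (\<Sum>t = 1..int n. complex_of_real (X t \<omega>) * cis (- l * of_int t)))^2 / (2 * pi * real n)"

definition Gset :: "nat \<Rightarrow> int set" where
  "Gset n = {- int (n div 2) .. int (n div 2)} - {0}"

definition fourier_freq :: "nat \<Rightarrow> int \<Rightarrow> real" where
  "fourier_freq n j = 2 * pi * of_int j / real n"

definition gamma_hat :: "nat \<Rightarrow> (int \<Rightarrow> 'a \<Rightarrow> real) \<Rightarrow> int \<Rightarrow> 'a \<Rightarrow> real" where
  "gamma_hat n X h \<omega> = (2 * pi / real n) *
     (\<Sum>j\<in>Gset n. periodogram n X \<omega> (fourier_freq n j) * cos (fourier_freq n j * of_int h))"

definition gamma_tilde :: "nat \<Rightarrow> (int \<Rightarrow> 'a \<Rightarrow> real) \<Rightarrow> int \<Rightarrow> 'a \<Rightarrow> real" where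
  "gamma_tilde n X h \<omega> = (1 / real n) * (\<Sum>t = 1..int n - \<bar>h\<bar>. X t \<omega> * X (t + \<bar>h\<bar>) \<omega>)"

end

theory Submission
  imports Defs "HOL-Analysis.Analysis"
begin

definition psi :: "real \<Rightarrow> real \<Rightarrow> nat \<Rightarrow> real" where
  "psi r lam m = r^m * sin (real (m+1) * lam) / sin lam"

lemma psi_0: "sin lam \<noteq> 0 \<Longrightarrow> psi r lam 0 = 1"
  by (simp add: psi_def)

lemma psi_1: "sin lam \<noteq> 0 \<Longrightarrow> psi r lam 1 = 2 * r * cos lam"
  by (simp add: psi_def sin_double)

lemma psi_Suc0: "sin lam \<noteq> 0 \<Longrightarrow> psi r lam (Suc 0) = 2 * r * cos lam"
  by (simp add: psi_def sin_double)

lemma psi_rec: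
  assumes "sin lam \<noteq> 0"
  shows "psi r lam (m+2) = 2 * r * cos lam * psi r lam (m+1) - r^2 * psi r lam m"
proof -
  have a: "real (m+3) * lam = real (m+2) * lam + lam" by (simp add: algebra_simps)
  have b: "real (m+1) * lam = real (m+2) * lam - lam" by (simp add: algebra_simps)
  have g: "sin (x + l) = 2 * cos l * sin x - sin (x - l)" for x l :: real
    by (simp add: sin_add sin_diff algebra_simps)
  have e: "sin (real (m+3) * lam) = 2 * cos lam * sin (real (m+2) * lam) - sin (real (m+1) * lam)"
    unfolding a b by (rule g)
  have "psi r lam (m+2) = r^(m+2) * sin (real (m+3) * lam) / sin lam"
    by (simp add: psi_def eval_nat_numeral)
  also have "\<dots> = r^(m+2) * (2 * cos lam * sin (real (m+2) * lam) - sin (real (m+1) * lam)) / sin lam"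
    by (simp only: e)
  also have "\<dots> = 2 * r * cos lam * psi r lam (m+1) - r^2 * psi r lam m"
    using assms by (simp add: psi_def field_simps power_add eval_nat_numeral)
  finally show ?thesis .
qed

lemma psi_abs:
  assumes "0 < lam" "lam < pi" "0 \<le> r"
  shows "\<bar>psi r lam m\<bar> \<le> r^m / sin lam"
proof -
  have s: "sin lam > 0" using assms sin_gt_zero by blast
  have "\<bar>psi r lam m\<bar> = r^m * \<bar>sin (real (m+1) * lam)\<bar> / sin lam"
    using s assms by (simp add: psi_def abs_mult)
  also have "\<dots> \<le> r^m * 1 / sin lam"
    using s assms by (intro divide_right_mono mult_left_mono) auto
  finally show ?thesis by simp
qed

lemma psi_summable:
  assumes "0 < lam" "lam < pi" "0 \<le> r" "r < 1"
  shows "summable (\<lambda>m. \<bar>psi r lam m\<bar>)"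
    and "(\<Sum>m. \<bar>psi r lam m\<bar>) \<le> 1 / ((1 - r) * sin lam)"
proof -
  have s: "sin lam > 0" using assms sin_gt_zero by blast
  have g: "summable (\<lambda>m. r^m / sin lam)"
    using assms by (intro summable_divide summable_geometric) auto
  show sm: "summable (\<lambda>m. \<bar>psi r lam m\<bar>)"
    by (rule summable_comparison_test[OF _ g]) (use psi_abs[OF assms(1-3)] in auto)
  have "(\<Sum>m. \<bar>psi r lam m\<bar>) \<le> (\<Sum>m. r^m / sin lam)"
    by (rule suminf_le[OF _ sm g]) (use psi_abs[OF assms(1-3)] in auto)
  also have "\<dots> = (\<Sum>m. r^m) / sin lam"
    using assms by (intro suminf_divide summable_geometric) auto
  also have "\<dots> = 1 / ((1 - r) * sin lam)"
    using assms by (simp add: suminf_geometric)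
  finally show "(\<Sum>m. \<bar>psi r lam m\<bar>) \<le> 1 / ((1 - r) * sin lam)" .
qed

lemma psi_lim:
  assumes "0 < lam" "lam < pi" "0 \<le> r" "r < 1"
  shows "psi r lam \<longlonglongrightarrow> 0"
proof -
  have "summable (psi r lam)"
    using psi_summable[OF assms] summable_rabs_cancel by blast
  then show ?thesis using summable_LIMSEQ_zero by blast
qed

lemma inv_partial:
  assumes "sin lam \<noteq> 0"
  shows "(\<Sum>m<Suc N. psi r lam m * (u m - 2*r*cos lam * u (m+1) + r^2 * u (m+2)))
      = u 0 - psi r lam (Suc N) * u (Suc N) + r^2 * psi r lam N * u (N+2)"
proof (induction N)
  case 0
  then show ?case using assms by (simp add: psi_0 psi_Suc0 algebra_simps)
next
  case (Suc N)
  have r: "psi r lam (Suc (Suc N)) = 2 * r * cos lam * psi r lam (N+1) - r^2 * psi r lam N"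
    using psi_rec[OF assms, where m=N and r=r] by (simp add: eval_nat_numeral)
  have "(\<Sum>m<Suc (Suc N). psi r lam m * (u m - 2*r*cos lam * u (m+1) + r^2 * u (m+2)))
     = (\<Sum>m<Suc N. psi r lam m * (u m - 2*r*cos lam * u (m+1) + r^2 * u (m+2)))
       + psi r lam (Suc N) * (u (Suc N) - 2*r*cos lam * u (Suc N+1) + r^2 * u (Suc N+2))"
    by (simp only: sum.lessThan_Suc)
  also have "\<dots> = u 0 - psi r lam (Suc N) * u (Suc N) + r^2 * psi r lam N * u (N+2)
       + psi r lam (Suc N) * (u (Suc N) - 2*r*cos lam * u (Suc N+1) + r^2 * u (Suc N+2))"
    by (simp only: Suc.IH)
  also have "\<dots> = u 0 - psi r lam (Suc (Suc N)) * u (Suc (Suc N)) + r^2 * psi r lam (Suc N) * u (Suc N+2)"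
    unfolding r by (simp add: algebra_simps eval_nat_numeral)
  finally show ?case .
qed

lemma inv_sums:
  assumes "0 < lam" "lam < pi" "0 \<le> r" "r < 1" and B: "\<And>m. \<bar>u m\<bar> \<le> B"
  shows "(\<lambda>m. psi r lam m * (u m - 2*r*cos lam * u (m+1) + r^2 * u (m+2))) sums u 0"
proof -
  have s: "sin lam \<noteq> 0" using assms sin_gt_zero by force
  have lim: "psi r lam \<longlonglongrightarrow> 0" by (rule psi_lim[OF assms(1-4)])
  have z1: "(\<lambda>N. psi r lam (Suc N) * u (Suc N)) \<longlonglongrightarrow> 0"
    by (rule lim_null_mult_right_bounded[OF LIMSEQ_Suc[OF lim], of _ B]) (use B in auto)
  have z2: "(\<lambda>N. r^2 * psi r lam N * u (N+2)) \<longlonglongrightarrow> 0"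
    using lim_null_mult_right_bounded[OF tendsto_mult_right_zero[OF lim, of "r^2"], of "\<lambda>N. u (N+2)" B] B
    by auto
  have "(\<lambda>N. u 0 - psi r lam (Suc N) * u (Suc N) + r^2 * psi r lam N * u (N+2)) \<longlonglongrightarrow> u 0 - 0 + 0"
    by (intro tendsto_add tendsto_diff tendsto_const z1 z2)
  then have "(\<lambda>N. u 0 - psi r lam (Suc N) * u (Suc N) + r^2 * psi r lam N * u (N+2)) \<longlonglongrightarrow> u 0"
    by simp
  then have "(\<lambda>N. \<Sum>m<Suc N. psi r lam m * (u m - 2*r*cos lam * u (m+1) + r^2 * u (m+2))) \<longlonglongrightarrow> u 0"
    by (simp only: inv_partial[OF s])
  then show ?thesis unfolding sums_def by (rule LIMSEQ_imp_Suc)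
qed

lemma gamma_repr:
  fixes g gU :: "int \<Rightarrow> real"
  assumes lam: "0 < lam" "lam < pi" and r: "0 \<le> r" "r < 1"
    and B: "\<And>k. \<bar>g k\<bar> \<le> B"
    and rec: "\<And>k. gU k = (1 + (2*r*cos lam)^2 + (r^2)^2) * g k
                 - 2*r*cos lam * (1 + r^2) * (g (k+1) + g (k-1)) + r^2 * (g (k+2) + g (k-2))"
  shows "(\<lambda>m'. psi r lam m' * (\<Sum>m. psi r lam m * gU (k - int m' + int m))) sums g k"
proof -
  define c where "c = 2*r*cos lam"
  define v where "v k = g k - c * g (k-1) + r^2 * g (k-2)" for k
  have B0: "0 \<le> B" using B[of 0] by linarith
  have cabs: "\<bar>c\<bar> \<le> 2" using r unfolding c_def
    by (auto simp: abs_mult intro!: mult_le_one abs_cos_le_one)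
  have vB: "\<bar>v k\<bar> \<le> B + 2 * B + B" for k
  proof -
    have "\<bar>c * g (k-1)\<bar> \<le> 2 * B" unfolding abs_mult
      using cabs B[of "k-1"] B0 by (intro mult_mono) auto
    moreover have "\<bar>r^2 * g (k-2)\<bar> \<le> 1 * B" unfolding abs_mult
      using r B[of "k-2"] B0 by (intro mult_mono) (auto simp: power_le_one)
    ultimately show ?thesis unfolding v_def using B[of k] by linarith
  qed
  have hv: "v k - c * v (k+1) + r^2 * v (k+2) = gU k" for k
    unfolding v_def rec c_def by (simp add: algebra_simps power2_eq_square)
  have s1: "(\<lambda>m. psi r lam m * gU (k' + int m)) sums v k'" for k'
  proof -
    have "(\<lambda>m. psi r lam m * (v (k' + int m) - 2*r*cos lam * v (k' + int (m+1)) + r^2 * v (k' + int (m+2)))) sums v (k' + int 0)"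
      by (rule inv_sums[OF lam r, of "\<lambda>m. v (k' + int m)"]) (use vB in auto)
    moreover have "v (k' + int m) - 2*r*cos lam * v (k' + int (m+1)) + r^2 * v (k' + int (m+2)) = gU (k' + int m)" for m
      using hv[of "k' + int m"] unfolding c_def by (simp add: algebra_simps)
    ultimately show ?thesis by simp
  qed
  have s2: "(\<lambda>m. psi r lam m * v (k - int m)) sums g k"
  proof -
    have "(\<lambda>m. psi r lam m * (g (k - int m) - 2*r*cos lam * g (k - int (m+1)) + r^2 * g (k - int (m+2)))) sums g (k - int 0)"
      by (rule inv_sums[OF lam r, of "\<lambda>m. g (k - int m)"]) (use B in auto)
    moreover have "g (k - int m) - 2*r*cos lam * g (k - int (m+1)) + r^2 * g (k - int (m+2)) = v (k - int m)" for m
      unfolding v_def c_def by (simp add: algebra_simps)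
    ultimately show ?thesis by simp
  qed
  have "v (k - int m') = (\<Sum>m. psi r lam m * gU (k - int m' + int m))" for m'
    using s1[of "k - int m'"] by (simp add: sums_iff)
  then show ?thesis using s2 by simp
qed

lemma swap2:
  fixes f :: "'i \<Rightarrow> 'i \<Rightarrow> nat \<Rightarrow> real"
  assumes "\<And>s t. summable (f s t)"
  shows "(\<Sum>s\<in>A. \<Sum>t\<in>A. suminf (f s t)) = (\<Sum>n. \<Sum>s\<in>A. \<Sum>t\<in>A. f s t n)"
proof -
  have "(\<Sum>s\<in>A. \<Sum>t\<in>A. suminf (f s t)) = (\<Sum>s\<in>A. \<Sum>n. \<Sum>t\<in>A. f s t n)"
    by (intro sum.cong refl suminf_sum[symmetric] assms)
  also have "\<dots> = (\<Sum>n. \<Sum>s\<in>A. \<Sum>t\<in>A. f s t n)"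
    by (intro suminf_sum[symmetric] summable_sum assms)
  finally show ?thesis .
qed

lemma abs_series_bound:
  fixes a b :: "nat \<Rightarrow> real"
  assumes "summable (\<lambda>n. \<bar>a n\<bar>)" "\<And>n. \<bar>b n\<bar> \<le> M"
  shows "summable (\<lambda>n. a n * b n)" "\<bar>\<Sum>n. a n * b n\<bar> \<le> (\<Sum>n. \<bar>a n\<bar>) * M"
proof -
  have le: "\<bar>a n * b n\<bar> \<le> \<bar>a n\<bar> * M" for n
    unfolding abs_mult using assms(2)[of n] by (intro mult_left_mono) auto
  have sm: "summable (\<lambda>n. \<bar>a n\<bar> * M)" using assms(1) by (rule summable_mult2)
  have sa: "summable (\<lambda>n. \<bar>a n * b n\<bar>)"
    by (rule summable_comparison_test[OF _ sm]) (use le in auto)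
  then show "summable (\<lambda>n. a n * b n)" by (rule summable_rabs_cancel)
  have "\<bar>\<Sum>n. a n * b n\<bar> \<le> (\<Sum>n. \<bar>a n * b n\<bar>)" by (rule summable_rabs[OF sa])
  also have "\<dots> \<le> (\<Sum>n. \<bar>a n\<bar> * M)" by (rule suminf_le[OF le sa sm])
  also have "\<dots> = (\<Sum>n. \<bar>a n\<bar>) * M" by (rule suminf_mult2[symmetric, OF assms(1)])
  finally show "\<bar>\<Sum>n. a n * b n\<bar> \<le> (\<Sum>n. \<bar>a n\<bar>) * M" .
qed

lemma row_bound:
  fixes gU :: "int \<Rightarrow> real"
  assumes sm: "(\<lambda>k. \<bar>gU k\<bar>) summable_on UNIV" and fin: "finite A"
  shows "(\<Sum>t\<in>A. \<bar>gU (t + j)\<bar>) \<le> infsum (\<lambda>k. \<bar>gU k\<bar>) UNIV"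
proof -
  have inj: "inj_on (\<lambda>t. t + j) A" by (auto simp: inj_on_def)
  have "(\<Sum>t\<in>A. \<bar>gU (t + j)\<bar>) = (\<Sum>k\<in>(\<lambda>t. t + j) ` A. \<bar>gU k\<bar>)"
    by (simp add: sum.reindex[OF inj])
  also have "\<dots> = infsum (\<lambda>k. \<bar>gU k\<bar>) ((\<lambda>t. t + j) ` A)"
    using fin by simp
  also have "\<dots> \<le> infsum (\<lambda>k. \<bar>gU k\<bar>) UNIV"
    by (rule infsum_mono_neutral) (use fin sm in auto)
  finally show ?thesis .
qed

lemma quad_bound:
  fixes g gU c :: "int \<Rightarrow> real"
  assumes lam: "0 < lam" "lam < pi" and r: "0 \<le> r" "r < 1"
    and repr: "\<And>k. (\<lambda>m'. psi r lam m' * (\<Sum>m. psi r lam m * gU (k - int m' + int m))) sums g k"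
    and sm: "(\<lambda>k. \<bar>gU k\<bar>) summable_on UNIV"
    and fin: "finite A" and c: "\<And>t. t \<in> A \<Longrightarrow> \<bar>c t\<bar> \<le> 1"
  shows "\<bar>\<Sum>s\<in>A. \<Sum>t\<in>A. c s * c t * g (t - s)\<bar>
           \<le> (\<Sum>m. \<bar>psi r lam m\<bar>) * ((\<Sum>m. \<bar>psi r lam m\<bar>) * (real (card A) * infsum (\<lambda>k. \<bar>gU k\<bar>) UNIV))"
proof -
  define G where "G = infsum (\<lambda>k. \<bar>gU k\<bar>) UNIV"
  define ps where "ps = psi r lam"
  have psa: "summable (\<lambda>m. \<bar>ps m\<bar>)" unfolding ps_def using psi_summable[OF lam r] by blast
  have gUb: "\<bar>gU k\<bar> \<le> G" for k
    using row_bound[OF sm, of "{0}" k] by (simp add: G_def)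
  define I where "I k m' = (\<Sum>m. ps m * gU (k - int m' + int m))" for k m'
  have sI: "summable (\<lambda>m. ps m * gU (k - int m' + int m))" for k m'
    by (rule abs_series_bound(1)[OF psa]) (use gUb in auto)
  have sO: "summable (\<lambda>m'. ps m' * I k m')" for k
    using repr[of k] unfolding I_def ps_def by (rule sums_summable)
  have gI: "g k = (\<Sum>m'. ps m' * I k m')" for k
    using repr[of k] unfolding I_def ps_def by (simp add: sums_iff)
  define W where "W m' m = (\<Sum>s\<in>A. \<Sum>t\<in>A. c s * c t * gU (t - s - int m' + int m))" for m' m
  have Wb: "\<bar>W m' m\<bar> \<le> real (card A) * G" for m' m
  proof -
    have "\<bar>W m' m\<bar> \<le> (\<Sum>s\<in>A. \<Sum>t\<in>A. \<bar>c s * c t * gU (t - s - int m' + int m)\<bar>)"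
      unfolding W_def by (rule order.trans[OF sum_abs sum_mono[OF sum_abs]])
    also have "\<dots> \<le> (\<Sum>s\<in>A. \<Sum>t\<in>A. \<bar>gU (t + (- s - int m' + int m))\<bar>)"
    proof (intro sum_mono)
      fix s t assume "s \<in> A" "t \<in> A"
      then have "\<bar>c s * c t\<bar> \<le> 1" using c by (simp add: abs_mult mult_le_one)
      then have "\<bar>c s * c t\<bar> * \<bar>gU (t - s - int m' + int m)\<bar> \<le> 1 * \<bar>gU (t - s - int m' + int m)\<bar>"
        by (intro mult_right_mono) auto
      then show "\<bar>c s * c t * gU (t - s - int m' + int m)\<bar> \<le> \<bar>gU (t + (- s - int m' + int m))\<bar>"
        by (simp add: abs_mult algebra_simps)
    qed
    also have "\<dots> \<le> (\<Sum>s\<in>A. G)"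
      by (intro sum_mono) (use row_bound[OF sm fin] in \<open>simp add: G_def\<close>)
    finally show ?thesis by simp
  qed
  have step1: "(\<Sum>s\<in>A. \<Sum>t\<in>A. c s * c t * g (t - s)) = (\<Sum>m'. ps m' * (\<Sum>s\<in>A. \<Sum>t\<in>A. c s * c t * I (t - s) m'))"
  proof -
    have "(\<Sum>s\<in>A. \<Sum>t\<in>A. c s * c t * g (t - s)) = (\<Sum>s\<in>A. \<Sum>t\<in>A. (\<Sum>m'. c s * c t * (ps m' * I (t - s) m')))"
      by (intro sum.cong refl) (simp add: gI suminf_mult[OF sO])
    also have "\<dots> = (\<Sum>m'. \<Sum>s\<in>A. \<Sum>t\<in>A. c s * c t * (ps m' * I (t - s) m'))"
      by (rule swap2) (intro summable_mult sO)
    also have "\<dots> = (\<Sum>m'. ps m' * (\<Sum>s\<in>A. \<Sum>t\<in>A. c s * c t * I (t - s) m'))"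
      by (simp add: sum_distrib_left algebra_simps)
    finally show ?thesis .
  qed
  have step2: "(\<Sum>s\<in>A. \<Sum>t\<in>A. c s * c t * I (t - s) m') = (\<Sum>m. ps m * W m' m)" for m'
  proof -
    have "(\<Sum>s\<in>A. \<Sum>t\<in>A. c s * c t * I (t - s) m') = (\<Sum>s\<in>A. \<Sum>t\<in>A. (\<Sum>m. c s * c t * (ps m * gU (t - s - int m' + int m))))"
      unfolding I_def by (intro sum.cong refl) (simp add: suminf_mult[OF sI])
    also have "\<dots> = (\<Sum>m. \<Sum>s\<in>A. \<Sum>t\<in>A. c s * c t * (ps m * gU (t - s - int m' + int m)))"
      by (rule swap2) (intro summable_mult sI)
    also have "\<dots> = (\<Sum>m. ps m * W m' m)"
      unfolding W_def by (simp add: sum_distrib_left algebra_simps)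
    finally show ?thesis .
  qed
  have inner: "\<bar>\<Sum>m. ps m * W m' m\<bar> \<le> (\<Sum>m. \<bar>ps m\<bar>) * (real (card A) * G)" for m'
    by (rule abs_series_bound(2)[OF psa Wb])
  have "\<bar>\<Sum>m'. ps m' * (\<Sum>m. ps m * W m' m)\<bar> \<le> (\<Sum>m. \<bar>ps m\<bar>) * ((\<Sum>m. \<bar>ps m\<bar>) * (real (card A) * G))"
    by (rule abs_series_bound(2)[OF psa inner])
  then show ?thesis unfolding step1 step2 by (simp add: ps_def G_def)
qed

lemma cmod_one_minus_cis_sq:
  "(cmod (1 - complex_of_real r * cis t))^2 = 1 - 2 * r * cos t + r^2"
proof -
  have re: "Re (1 - complex_of_real r * cis t) = 1 - r*cos t" by simp
  have im: "Im (1 - complex_of_real r * cis t) = - (r * sin t)" by simp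
  have s: "sin t ^2 + cos t ^2 = 1" by simp
  show ?thesis unfolding cmod_power2 re im using s by algebra
qed

lemma den_eq:
  fixes r l lam :: real
  shows "(cmod (1 - complex_of_real r * cis (- (l - lam))))^2 *
         (cmod (1 - complex_of_real r * cis (- (l + lam))))^2
       = (1 + (2*r*cos lam)^2 + (r^2)^2) + 2 * (- 2*r*cos lam * (1 + r^2)) * cos l + 2 * r^2 * cos (2 * l)"
proof -
  have s1: "sin l ^2 = 1 - cos l ^2" and s2: "sin lam ^2 = 1 - cos lam ^2"
    by (simp_all add: sin_squared_eq)
  have c2: "cos (2*l) = 2 * cos l ^2 - 1" by (simp add: cos_double_cos)
  show ?thesis unfolding cmod_one_minus_cis_sq cos_minus cos_diff cos_add c2
    using s1 s2 by algebra
qed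

lemma cis_cos:
  "2 * (cis a * complex_of_real (cos b)) = cis (a + b) + cis (a - b)"
  by (simp add: complex_eq_iff cos_add cos_diff sin_add sin_diff algebra_simps)

lemma den_pos:
  assumes "0 \<le> r" "r < 1"
  shows "0 < (cmod (1 - complex_of_real r * cis t))^2"
proof -
  have "cmod (complex_of_real r * cis t) = r" using assms by (simp add: norm_mult)
  then have "1 - complex_of_real r * cis t \<noteq> 0" using assms by auto
  then show ?thesis by simp
qed

lemma recurrence:
  fixes gU g :: "int \<Rightarrow> real"
  assumes sU: "spectral_density gU fU" and sX: "spectral_density g (f_delta fU lam \<delta>)"
    and d: "0 < \<delta>" "\<delta> < 1"
  shows "gU k = (1 + (2*(1-\<delta>)*cos lam)^2 + ((1-\<delta>)^2)^2) * g k
                 - 2*(1-\<delta>)*cos lam * (1 + (1-\<delta>)^2) * (g (k+1) + g (k-1)) + (1-\<delta>)^2 * (g (k+2) + g (k-2))"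
proof -
  define r where "r = 1 - \<delta>"
  have r: "0 \<le> r" "r < 1" using d by (auto simp: r_def)
  define a0 where "a0 = 1 + (2*r*cos lam)^2 + (r^2)^2"
  define a1 where "a1 = - 2*r*cos lam * (1 + r^2)"
  define a2 where "a2 = r^2"
  define fd where "fd = f_delta fU lam \<delta>"
  define F where "F j l = cis (of_int j * l) * complex_of_real (fd l)" for j l
  have hF: "(F j has_integral complex_of_real (g j)) {-pi..pi}" for j
    using sX unfolding spectral_density_def F_def fd_def by blast
  have hU: "((\<lambda>l. cis (of_int k * l) * complex_of_real (fU l)) has_integral complex_of_real (gU k)) {-pi..pi}"
    using sU unfolding spectral_density_def by blast
  define Den where "Den l = (cmod (1 - complex_of_real r * cis (- (l - lam))))^2 *
         (cmod (1 - complex_of_real r * cis (- (l + lam))))^2" for l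
  have Dpos: "Den l > 0" for l unfolding Den_def using den_pos[OF r] by (intro mult_pos_pos)
  have fd_eq: "fd l = fU l / Den l" for l
    unfolding fd_def f_delta_def Den_def r_def by simp
  have fU_eq: "fU l = fd l * Den l" for l
    using Dpos[of l] unfolding fd_eq by simp
  have Deq: "Den l = a0 + 2 * a1 * cos l + 2 * a2 * cos (2 * l)" for l
    unfolding Den_def a0_def a1_def a2_def by (rule den_eq)
  have pt: "cis (of_int k * l) * complex_of_real (fU l) =
      complex_of_real a0 * F k l + complex_of_real a1 * (F (k+1) l + F (k-1) l)
      + complex_of_real a2 * (F (k+2) l + F (k-2) l)" for l
  proof -
    have "cis (of_int k * l) * complex_of_real (fU l) =
       complex_of_real (fd l) * (complex_of_real a0 * cis (of_int k * l)
        + complex_of_real a1 * (2 * (cis (of_int k * l) * complex_of_real (cos l)))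
        + complex_of_real a2 * (2 * (cis (of_int k * l) * complex_of_real (cos (2 * l)))))"
      unfolding fU_eq Deq by (simp add: algebra_simps)
    also have "\<dots> = complex_of_real a0 * F k l + complex_of_real a1 * (F (k+1) l + F (k-1) l)
      + complex_of_real a2 * (F (k+2) l + F (k-2) l)"
      unfolding cis_cos F_def by (simp add: algebra_simps)
    finally show ?thesis .
  qed
  have hC: "((\<lambda>l. complex_of_real a0 * F k l + complex_of_real a1 * (F (k+1) l + F (k-1) l)
      + complex_of_real a2 * (F (k+2) l + F (k-2) l)) has_integral
      (complex_of_real a0 * complex_of_real (g k) + complex_of_real a1 * (complex_of_real (g (k+1)) + complex_of_real (g (k-1)))
      + complex_of_real a2 * (complex_of_real (g (k+2)) + complex_of_real (g (k-2))))) {-pi..pi}"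
    by (intro has_integral_add has_integral_mult_right hF)
  have "complex_of_real (gU k) = complex_of_real a0 * complex_of_real (g k) + complex_of_real a1 * (complex_of_real (g (k+1)) + complex_of_real (g (k-1)))
      + complex_of_real a2 * (complex_of_real (g (k+2)) + complex_of_real (g (k-2)))"
    using has_integral_unique[OF hU hC[folded pt]] by simp
  then have "gU k = a0 * g k + a1 * (g (k+1) + g (k-1)) + a2 * (g (k+2) + g (k-2))"
    by (metis of_real_add of_real_mult of_real_eq_iff)
  then show ?thesis unfolding a0_def a1_def a2_def r_def by (simp add: algebra_simps)
qed

lemma sum_roots_cos:
  assumes n: "n \<ge> 1"
  shows "(\<Sum>j<n. cos (real j * (2 * pi * of_int m / real n))) = (if int n dvd m then real n else 0)"
proof (cases "int n dvd m")
  case True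
  then obtain k where k: "m = int n * k" by (auto elim: dvdE)
  have "cos (real j * (2 * pi * of_int m / real n)) = 1" for j
  proof -
    have "real j * (2 * pi * of_int m / real n) = (2 * pi) * of_int (int j * k)"
      using n by (simp add: k field_simps)
    then show ?thesis by (simp only: cos_int_2pin)
  qed
  then show ?thesis using True by simp
next
  case False
  define z where "z = cis (2 * pi * of_int m / real n)"
  have zj: "z ^ j = cis (real j * (2 * pi * of_int m / real n))" for j
    unfolding z_def by (rule Complex.DeMoivre)
  have zn: "z ^ n = 1"
  proof -
    have "real n * (2 * pi * of_int m / real n) = 2 * pi * of_int m" using n by simp
    then show ?thesis unfolding zj by (simp add: complex_eq_iff)
  qed
  have z1: "z \<noteq> 1"
  proof
    assume "z = 1"
    then have "cos (2 * pi * of_int m / real n) = 1" unfolding z_def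
      by (metis cis.sel(1) one_complex.sel(1))
    then obtain k :: int where "2 * pi * of_int m / real n = of_int k * 2 * pi"
      using cos_one_2pi_int by blast
    then have "of_int m = of_int k * real n" using n by (simp add: field_simps)
    then have "m = k * int n" by (metis of_int_eq_iff of_int_mult of_int_of_nat_eq)
    then show False using False by simp
  qed
  have "(\<Sum>j<n. z ^ j) = 0" using geometric_sum[OF z1] zn by simp
  then have "Re (\<Sum>j<n. z ^ j) = 0" by simp
  then show ?thesis using False unfolding zj by simp
qed

lemma sum_periodic_G:
  fixes f :: "int \<Rightarrow> real"
  assumes n: "n \<ge> 1" and per: "\<And>j. f (j + int n) = f j"
  shows "(\<Sum>j\<in>{- int (n div 2) .. int (n div 2)}. f j)
       = (\<Sum>j<n. f (int j)) + (if even n then f (int (n div 2)) else 0)"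
proof -
  define N where "N = int (n div 2)"
  have N0: "0 \<le> N" unfolding N_def by simp
  have split1: "{-N..N} = {-N..-1} \<union> {0..N}" using N0 by auto
  have s1: "(\<Sum>j\<in>{-N..N}. f j) = (\<Sum>j\<in>{-N..-1}. f j) + (\<Sum>j\<in>{0..N}. f j)"
    unfolding split1 by (rule sum.union_disjoint) auto
  have s2: "(\<Sum>j\<in>{-N..-1}. f j) = (\<Sum>j\<in>{int n - N..int n - 1}. f j)"
    by (rule sum.reindex_bij_witness[of _ "\<lambda>j. j - int n" "\<lambda>j. j + int n"])
       (auto simp: per)
  have s3: "(\<Sum>j<n. f (int j)) = (\<Sum>j\<in>{0..int n - 1}. f j)"
    by (rule sum.reindex_bij_witness[of _ nat int]) auto
  show ?thesis
  proof (cases "even n")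
    case True
    then have e: "int n - N = N" "N \<ge> 1" using n unfolding N_def by auto
    have a: "{0..int n - 1} = {0..N-1} \<union> {N..int n - 1}" using e by auto
    have b: "{0..N} = {0..N-1} \<union> {N}" using e by auto
    have "(\<Sum>j\<in>{0..int n - 1}. f j) = (\<Sum>j\<in>{0..N-1}. f j) + (\<Sum>j\<in>{N..int n - 1}. f j)"
      unfolding a by (rule sum.union_disjoint) auto
    moreover have "(\<Sum>j\<in>{0..N}. f j) = (\<Sum>j\<in>{0..N-1}. f j) + f N"
      unfolding b by (subst sum.union_disjoint) auto
    ultimately show ?thesis using s1 s2 s3 e True unfolding N_def[symmetric] by simp
  next
    case False
    then have e: "int n - N = N + 1" using n unfolding N_def by presburger
    have a: "{0..int n - 1} = {0..N} \<union> {N+1..int n - 1}" using e N0 by auto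
    have "(\<Sum>j\<in>{0..int n - 1}. f j) = (\<Sum>j\<in>{0..N}. f j) + (\<Sum>j\<in>{N+1..int n - 1}. f j)"
      unfolding a by (rule sum.union_disjoint) auto
    then show ?thesis using s1 s2 s3 e False unfolding N_def[symmetric] by simp
  qed
qed

definition Ssum :: "nat \<Rightarrow> int \<Rightarrow> real" where
  "Ssum n m = (\<Sum>j\<in>Gset n. cos (fourier_freq n j * of_int m))"

lemma Ssum_eq:
  assumes n: "n \<ge> 1"
  shows "Ssum n m = (if int n dvd m then real n else 0) - 1 + (if even n then cos (pi * of_int m) else 0)"
proof -
  define f where "f j = cos (fourier_freq n j * of_int m)" for j
  have per: "f (j + int n) = f j" for j
  proof -
    have "fourier_freq n (j + int n) * of_int m = fourier_freq n j * of_int m + 2 * pi * of_int m"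
      using n by (simp add: fourier_freq_def field_simps)
    then show ?thesis unfolding f_def by (simp add: cos_add)
  qed
  have G: "Gset n = {- int (n div 2) .. int (n div 2)} - {0}" by (simp add: Gset_def)
  have "Ssum n m = (\<Sum>j\<in>{- int (n div 2) .. int (n div 2)}. f j) - f 0"
    unfolding Ssum_def G f_def[symmetric] by (subst sum_diff1) auto
  also have "\<dots> = (\<Sum>j<n. f (int j)) + (if even n then f (int (n div 2)) else 0) - f 0"
    by (simp add: sum_periodic_G[of n f, OF n per])
  also have "(\<Sum>j<n. f (int j)) = (\<Sum>j<n. cos (real j * (2 * pi * of_int m / real n)))"
    unfolding f_def fourier_freq_def by (intro sum.cong refl) (simp add: field_simps)
  also have "\<dots> = (if int n dvd m then real n else 0)" by (rule sum_roots_cos[OF n])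
  finally have *: "Ssum n m = (if int n dvd m then real n else 0) + (if even n then f (int (n div 2)) else 0) - f 0" .
  have ev: "f (int (n div 2)) = cos (pi * of_int m)" if "even n"
  proof -
    have q: "real n = 2 * real (n div 2)" using that by (auto elim!: evenE)
    have "real (n div 2) > 0" using n that by auto
    then show ?thesis unfolding f_def fourier_freq_def q by (simp add: field_simps)
  qed
  show ?thesis unfolding * using ev by (simp add: f_def fourier_freq_def)
qed

lemma cmod_sum_sq:
  fixes x a :: "int \<Rightarrow> real"
  shows "(cmod (\<Sum>t\<in>A. complex_of_real (x t) * cis (a t)))^2 = (\<Sum>s\<in>A. \<Sum>t\<in>A. x s * x t * cos (a s - a t))"
proof -
  define z where "z = (\<Sum>t\<in>A. complex_of_real (x t) * cis (a t))"
  have cz: "cnj z = (\<Sum>t\<in>A. complex_of_real (x t) * cis (- a t))"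
    unfolding z_def by (simp add: cis_cnj)
  have "z * cnj z = (\<Sum>s\<in>A. \<Sum>t\<in>A. complex_of_real (x s) * cis (a s) * (complex_of_real (x t) * cis (- a t)))"
    unfolding cz unfolding z_def by (rule sum_product)
  also have "\<dots> = (\<Sum>s\<in>A. \<Sum>t\<in>A. complex_of_real (x s * x t) * cis (a s - a t))"
    by (intro sum.cong refl) (simp add: cis_mult algebra_simps)
  finally have zz: "z * cnj z = (\<Sum>s\<in>A. \<Sum>t\<in>A. complex_of_real (x s * x t) * cis (a s - a t))" .
  have "complex_of_real ((cmod z)^2) = (\<Sum>s\<in>A. \<Sum>t\<in>A. complex_of_real (x s * x t) * cis (a s - a t))"
    by (simp only: complex_norm_square zz)
  then have "Re (complex_of_real ((cmod z)^2)) = Re (\<Sum>s\<in>A. \<Sum>t\<in>A. complex_of_real (x s * x t) * cis (a s - a t))"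
    by simp
  then show ?thesis unfolding z_def by (simp add: Re_sum)
qed

lemma periodogram_eq:
  "periodogram n X \<omega> l = (\<Sum>s\<in>{1..int n}. \<Sum>t\<in>{1..int n}. X s \<omega> * X t \<omega> * cos (l * of_int (t - s))) / (2 * pi * real n)"
proof -
  have "(cmod (\<Sum>t = 1..int n. complex_of_real (X t \<omega>) * cis (- l * of_int t)))^2
      = (\<Sum>s\<in>{1..int n}. \<Sum>t\<in>{1..int n}. X s \<omega> * X t \<omega> * cos (- l * of_int s - - l * of_int t))"
    by (rule cmod_sum_sq[where x = "\<lambda>t. X t \<omega>" and a = "\<lambda>t. - l * of_int t"])
  also have "\<dots> = (\<Sum>s\<in>{1..int n}. \<Sum>t\<in>{1..int n}. X s \<omega> * X t \<omega> * cos (l * of_int (t - s)))"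
    by (intro sum.cong refl) (simp add: algebra_simps)
  finally show ?thesis unfolding periodogram_def by simp
qed

lemma cos_prod_sum: "cos a * cos b = (cos (a + b) + cos (a - b)) / (2::real)"
  by (simp add: cos_add cos_diff)

lemma gamma_hat_S:
  assumes n: "n \<ge> 1"
  shows "gamma_hat n X h \<omega> = (1 / (2 * real n ^ 2)) *
     (\<Sum>s\<in>{1..int n}. \<Sum>t\<in>{1..int n}. X s \<omega> * X t \<omega> * (Ssum n (t - s + h) + Ssum n (t - s - h)))"
proof -
  define A where "A = {1..int n}"
  define x where "x t = X t \<omega>" for t
  have c: "cos (fourier_freq n j * of_int (t - s)) * cos (fourier_freq n j * of_int h)
      = (cos (fourier_freq n j * of_int (t - s + h)) + cos (fourier_freq n j * of_int (t - s - h))) / 2" for j t s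
    unfolding cos_prod_sum by (simp add: algebra_simps)
  have c2: "(\<Sum>j\<in>Gset n. cos (fourier_freq n j * of_int (t - s)) * cos (fourier_freq n j * of_int h))
      = (Ssum n (t - s + h) + Ssum n (t - s - h)) / 2" for t s
    unfolding c Ssum_def by (simp add: sum_divide_distrib[symmetric] sum.distrib)
  have "gamma_hat n X h \<omega> = (2 * pi / real n) * (\<Sum>j\<in>Gset n. ((\<Sum>s\<in>A. \<Sum>t\<in>A. x s * x t * cos (fourier_freq n j * of_int (t - s))) / (2 * pi * real n)) * cos (fourier_freq n j * of_int h))"
    unfolding gamma_hat_def periodogram_eq A_def x_def ..
  also have "\<dots> = (1 / real n ^ 2) * (\<Sum>j\<in>Gset n. \<Sum>s\<in>A. \<Sum>t\<in>A. x s * x t * (cos (fourier_freq n j * of_int (t - s)) * cos (fourier_freq n j * of_int h)))"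
    using n by (simp add: sum_distrib_left sum_distrib_right sum_divide_distrib field_simps power2_eq_square)
  also have "\<dots> = (1 / real n ^ 2) * (\<Sum>s\<in>A. \<Sum>t\<in>A. x s * x t * (\<Sum>j\<in>Gset n. cos (fourier_freq n j * of_int (t - s)) * cos (fourier_freq n j * of_int h)))"
    by (simp add: sum_distrib_left sum.swap[of _ "Gset n"] sum.swap[of _ "Gset n" A])
  also have "\<dots> = (1 / real n ^ 2) * (\<Sum>s\<in>A. \<Sum>t\<in>A. x s * x t * ((Ssum n (t - s + h) + Ssum n (t - s - h)) / 2))"
    by (simp only: c2)
  also have "\<dots> = (1 / (2 * real n ^ 2)) * (\<Sum>s\<in>A. \<Sum>t\<in>A. x s * x t * (Ssum n (t - s + h) + Ssum n (t - s - h)))"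
    by (simp add: sum_distrib_left sum_divide_distrib mult.commute)
  finally show ?thesis unfolding A_def x_def .
qed

lemma dvd_char:
  fixes s t H :: int
  assumes "n \<ge> 1" "1 \<le> s" "s \<le> int n" "1 \<le> t" "t \<le> int n" "0 \<le> H" "H < int n"
  shows "(int n dvd (t - s - H)) = (t = s + H \<or> t = s + H - int n)"
proof
  assume "int n dvd (t - s - H)"
  then obtain k where k: "t - s - H = int n * k" by (auto elim: dvdE)
  have "k < 1"
  proof (rule ccontr)
    assume "\<not> k < 1"
    then have "int n * k \<ge> int n * 1" using assms by (intro mult_left_mono) auto
    then show False using k assms by linarith
  qed
  moreover have "k > -2"
  proof (rule ccontr)
    assume "\<not> k > -2"
    then have "int n * k \<le> int n * (-2)" using assms by (intro mult_left_mono) auto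
    then show False using k assms by linarith
  qed
  ultimately have "k = 0 \<or> k = -1" by linarith
  then show "t = s + H \<or> t = s + H - int n" using k by auto
next
  assume "t = s + H \<or> t = s + H - int n"
  then show "int n dvd (t - s - H)" by auto
qed

lemma gamma_tilde_double:
  fixes x :: "int \<Rightarrow> real"
  assumes "0 \<le> H"
  shows "(\<Sum>t = 1..int n - H. x t * x (t + H)) =
         (\<Sum>s\<in>{1..int n}. \<Sum>t\<in>{1..int n}. if t = s + H then x s * x t else 0)"
proof -
  have "(\<Sum>s\<in>{1..int n}. \<Sum>t\<in>{1..int n}. if t = s + H then x s * x t else 0)
      = (\<Sum>s\<in>{1..int n}. if s + H \<in> {1..int n} then x s * x (s + H) else 0)"
    by (intro sum.cong refl) (simp add: sum.delta')
  also have "\<dots> = (\<Sum>s\<in>{s\<in>{1..int n}. s + H \<in> {1..int n}}. x s * x (s + H))"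
    by (rule sum.inter_filter[symmetric]) simp
  also have "{s\<in>{1..int n}. s + H \<in> {1..int n}} = {1..int n - H}"
    using assms by auto
  finally show ?thesis by simp
qed

lemma cos_pi_int_sum:
  fixes s t h :: int
  shows "cos (pi * of_int (t - s + h)) + cos (pi * of_int (t - s - h))
       = 2 * cos (pi * of_int h) * (cos (pi * of_int s) * cos (pi * of_int t))"
proof -
  have a: "cos (pi * of_int (t - s + h)) + cos (pi * of_int (t - s - h)) = 2 * cos (pi * of_int (t - s)) * cos (pi * of_int h)"
    by (simp add: cos_add cos_diff algebra_simps)
  have b: "cos (pi * of_int (t - s)) = cos (pi * of_int t) * cos (pi * of_int s)"
    using sin_npi_int[of t] sin_npi_int[of s] by (simp add: cos_diff algebra_simps)
  show ?thesis unfolding a b by simp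
qed

lemma dft_identity:
  assumes n: "n \<ge> 1" and hn: "\<bar>h\<bar> < int n"
  shows "gamma_hat n X h \<omega> - gamma_tilde n X h \<omega> =
     (1 / real n) * (\<Sum>s\<in>{1..int n}. \<Sum>t\<in>{1..int n}. if t = s + \<bar>h\<bar> - int n then X s \<omega> * X t \<omega> else 0)
     - (\<Sum>t\<in>{1..int n}. X t \<omega>)^2 / real n ^ 2
     + (if even n then 1 else 0) * cos (pi * of_int h) * (\<Sum>t\<in>{1..int n}. cos (pi * of_int t) * X t \<omega>)^2 / real n ^ 2"
proof -
  define A where "A = {1..int n}"
  define x where "x t = X t \<omega>" for t
  define H where "H = \<bar>h\<bar>"
  define ev :: real where "ev = (if even n then 1 else 0)"
  define c where "c t = cos (pi * of_int t)" for t :: int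
  define P1 where "P1 = (\<Sum>s\<in>A. \<Sum>t\<in>A. if int n dvd (t - s + h) then x s * x t else 0)"
  define P2 where "P2 = (\<Sum>s\<in>A. \<Sum>t\<in>A. if int n dvd (t - s - h) then x s * x t else 0)"
  define PH where "PH = (\<Sum>s\<in>A. \<Sum>t\<in>A. if int n dvd (t - s - H) then x s * x t else 0)"
  define T0 where "T0 = (\<Sum>s\<in>A. \<Sum>t\<in>A. if t = s + H then x s * x t else 0)"
  define T1 where "T1 = (\<Sum>s\<in>A. \<Sum>t\<in>A. if t = s + H - int n then x s * x t else 0)"
  define Q0 where "Q0 = (\<Sum>s\<in>A. \<Sum>t\<in>A. x s * x t)"
  define Qc where "Qc = (\<Sum>s\<in>A. \<Sum>t\<in>A. (c s * x s) * (c t * x t))"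
  have pt: "x s * x t * (Ssum n (t - s + h) + Ssum n (t - s - h)) =
      real n * (if int n dvd (t - s + h) then x s * x t else 0)
      + real n * (if int n dvd (t - s - h) then x s * x t else 0)
      - 2 * (x s * x t) + ev * (2 * cos (pi * of_int h)) * ((c s * x s) * (c t * x t))" for s t
  proof -
    have "Ssum n (t - s + h) + Ssum n (t - s - h) =
        (if int n dvd (t - s + h) then real n else 0) + (if int n dvd (t - s - h) then real n else 0) - 2
        + ev * (cos (pi * of_int (t - s + h)) + cos (pi * of_int (t - s - h)))"
      unfolding Ssum_eq[OF n] ev_def by auto
    also have "cos (pi * of_int (t - s + h)) + cos (pi * of_int (t - s - h)) = 2 * cos (pi * of_int h) * (c s * c t)"
      unfolding c_def by (rule cos_pi_int_sum)
    finally have E: "Ssum n (t - s + h) + Ssum n (t - s - h) =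
        (if int n dvd (t - s + h) then real n else 0) + (if int n dvd (t - s - h) then real n else 0) - 2
        + ev * (2 * cos (pi * of_int h) * (c s * c t))" .
    show ?thesis unfolding E
      by (cases "int n dvd (t - s + h)"; cases "int n dvd (t - s - h)") (simp_all add: algebra_simps)
  qed
  have main: "(\<Sum>s\<in>A. \<Sum>t\<in>A. x s * x t * (Ssum n (t - s + h) + Ssum n (t - s - h)))
      = real n * P1 + real n * P2 - 2 * Q0 + ev * (2 * cos (pi * of_int h)) * Qc"
    unfolding pt P1_def P2_def Q0_def Qc_def
    by (simp only: sum.distrib sum_subtractf sum_distrib_left[symmetric])
  have P12: "P1 = P2"
  proof -
    have "P1 = (\<Sum>t\<in>A. \<Sum>s\<in>A. if int n dvd (t - s + h) then x s * x t else 0)"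
      unfolding P1_def by (rule sum.swap)
    also have "\<dots> = P2" unfolding P2_def
    proof (intro sum.cong refl)
      fix s t
      have e: "t - s - h = - (s - t + h)" by simp
      show "(if int n dvd (s - t + h) then x t * x s else 0) = (if int n dvd (t - s - h) then x s * x t else 0)"
        unfolding e dvd_minus_iff by (simp add: mult.commute)
    qed
    finally show ?thesis .
  qed
  have PHeq: "PH = P2 \<or> PH = P1"
    unfolding PH_def P1_def P2_def H_def by (cases "h \<ge> 0") (auto simp: algebra_simps)
  have PH12: "P1 = PH" "P2 = PH" using P12 PHeq by auto
  have PHsplit: "PH = T0 + T1"
    unfolding PH_def T0_def T1_def sum.distrib[symmetric]
  proof (intro sum.cong refl)
    fix s t assume s: "s \<in> A" and t: "t \<in> A"
    have d: "(int n dvd (t - s - H)) = (t = s + H \<or> t = s + H - int n)"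
      by (rule dvd_char) (use n hn s t in \<open>auto simp: A_def H_def\<close>)
    have "\<not> (t = s + H \<and> t = s + H - int n)" using n by auto
    then show "(if int n dvd (t - s - H) then x s * x t else 0) =
        (if t = s + H then x s * x t else 0) + (if t = s + H - int n then x s * x t else 0)"
      unfolding d by auto
  qed
  have Q0eq: "Q0 = (\<Sum>t\<in>A. x t)^2"
    unfolding Q0_def power2_eq_square sum_product ..
  have Qceq: "Qc = (\<Sum>t\<in>A. c t * x t)^2"
    unfolding Qc_def power2_eq_square sum_product ..
  have gh: "gamma_hat n X h \<omega> = (1 / (2 * real n ^ 2)) * (real n * PH + real n * PH - 2 * Q0 + ev * (2 * cos (pi * of_int h)) * Qc)"
    using gamma_hat_S[OF n, of X h \<omega>] main PH12 unfolding A_def x_def by simp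
  have gt: "gamma_tilde n X h \<omega> = (1 / real n) * T0"
    unfolding gamma_tilde_def T0_def A_def x_def H_def
    by (subst gamma_tilde_double[where x = "\<lambda>t. X t \<omega>"]) auto
  have "gamma_hat n X h \<omega> - gamma_tilde n X h \<omega> = (1 / real n) * T1 - Q0 / real n ^ 2 + ev * cos (pi * of_int h) * Qc / real n ^ 2"
    unfolding gh gt PHsplit using n by (simp add: field_simps power2_eq_square)
  then show ?thesis unfolding T1_def Q0eq Qceq A_def x_def H_def ev_def c_def .
qed

lemma two_abs_prod: "2 * \<bar>a * b\<bar> \<le> a^2 + (b::real)^2"
  using sum_squares_bound[of "\<bar>a\<bar>" "\<bar>b\<bar>"] by (simp add: abs_mult)

context
  fixes M :: "'a measure" and X :: "int \<Rightarrow> 'a \<Rightarrow> real"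
  assumes ws: "weakly_stationary M X"
begin

lemma ws_prob: "prob_space M" using ws unfolding weakly_stationary_def by blast

lemma ws_meas[measurable]: "X t \<in> borel_measurable M" using ws unfolding weakly_stationary_def by blast

lemma ws_sq_int: "integrable M (\<lambda>\<omega>. (X t \<omega>)^2)" using ws unfolding weakly_stationary_def by blast

lemma ws_prod_int: "integrable M (\<lambda>\<omega>. X s \<omega> * X t \<omega>)"
proof (rule Bochner_Integration.integrable_bound[OF Bochner_Integration.integrable_add[OF ws_sq_int[of s] ws_sq_int[of t]]])
  show "(\<lambda>\<omega>. X s \<omega> * X t \<omega>) \<in> borel_measurable M" by measurable
  show "AE x in M. norm (X s x * X t x) \<le> norm ((X s x)\<^sup>2 + (X t x)\<^sup>2)"
  proof (intro AE_I2)
    fix x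
    have "\<bar>X s x * X t x\<bar> \<le> (X s x)\<^sup>2 + (X t x)\<^sup>2"
      using two_abs_prod[of "X s x" "X t x"] by simp
    then show "norm (X s x * X t x) \<le> norm ((X s x)\<^sup>2 + (X t x)\<^sup>2)" by simp
  qed
qed

lemma ws_abs_prod_int: "integrable M (\<lambda>\<omega>. \<bar>X s \<omega> * X t \<omega>\<bar>)"
  using ws_prod_int by (rule integrable_abs)

lemma ws_cov: "(\<integral>\<omega>. X s \<omega> * X t \<omega> \<partial>M) = autocov M X (t - s)"
proof -
  have "(\<integral>\<omega>. X s \<omega> * X (s + (t - s)) \<omega> \<partial>M) = (\<integral>\<omega>. X 0 \<omega> * X (t - s) \<omega> \<partial>M)"
    using ws unfolding weakly_stationary_def by blast
  then show ?thesis unfolding autocov_def by simp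
qed

lemma ws_sq: "(\<integral>\<omega>. (X t \<omega>)^2 \<partial>M) = autocov M X 0"
  using ws_cov[of t t] by (simp add: power2_eq_square)

lemma ws_abs_prod: "(\<integral>\<omega>. \<bar>X s \<omega> * X t \<omega>\<bar> \<partial>M) \<le> autocov M X 0"
proof -
  have "(\<integral>\<omega>. \<bar>X s \<omega> * X t \<omega>\<bar> \<partial>M) \<le> (\<integral>\<omega>. ((X s \<omega>)^2 + (X t \<omega>)^2) / 2 \<partial>M)"
  proof (rule integral_mono[OF ws_abs_prod_int])
    show "integrable M (\<lambda>\<omega>. ((X s \<omega>)^2 + (X t \<omega>)^2) / 2)"
      by (intro integrable_divide Bochner_Integration.integrable_add ws_sq_int)
    fix \<omega>
    have "2 * \<bar>X s \<omega> * X t \<omega>\<bar> \<le> (X s \<omega>)^2 + (X t \<omega>)^2"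
      by (rule two_abs_prod)
    then show "\<bar>X s \<omega> * X t \<omega>\<bar> \<le> ((X s \<omega>)^2 + (X t \<omega>)^2) / 2" by simp
  qed
  also have "\<dots> = autocov M X 0"
    using ws_sq_int[of s] ws_sq_int[of t] by (simp add: ws_sq)
  finally show ?thesis .
qed

lemma ws_bounded: "\<bar>autocov M X k\<bar> \<le> autocov M X 0"
proof -
  have "\<bar>autocov M X k\<bar> = \<bar>\<integral>\<omega>. X 0 \<omega> * X k \<omega> \<partial>M\<bar>" using ws_cov[of 0 k] by simp
  also have "\<dots> \<le> (\<integral>\<omega>. \<bar>X 0 \<omega> * X k \<omega>\<bar> \<partial>M)" by (rule integral_abs_bound)
  also have "\<dots> \<le> autocov M X 0" by (rule ws_abs_prod)
  finally show ?thesis .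
qed

lemma ws_quad_int: "integrable M (\<lambda>\<omega>. (\<Sum>t\<in>A. c t * X t \<omega>)^2)"
proof -
  have e: "(\<lambda>\<omega>. (\<Sum>t\<in>A. c t * X t \<omega>)^2) = (\<lambda>\<omega>. \<Sum>s\<in>A. \<Sum>t\<in>A. (c s * c t) * (X s \<omega> * X t \<omega>))"
    by (simp add: power2_eq_square sum_product algebra_simps)
  show ?thesis unfolding e by (auto intro!: integrable_sum simp: ws_prod_int)
qed

lemma ws_quad: "(\<integral>\<omega>. (\<Sum>t\<in>A. c t * X t \<omega>)^2 \<partial>M) = (\<Sum>s\<in>A. \<Sum>t\<in>A. c s * c t * autocov M X (t - s))"
proof -
  have e: "(\<lambda>\<omega>. (\<Sum>t\<in>A. c t * X t \<omega>)^2) = (\<lambda>\<omega>. \<Sum>s\<in>A. \<Sum>t\<in>A. (c s * c t) * (X s \<omega> * X t \<omega>))"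
    by (simp add: power2_eq_square sum_product algebra_simps)
  show ?thesis unfolding e
    by (simp add: integral_sum integrable_sum integrable_mult_right ws_prod_int ws_cov)
qed

end

lemma quad_delta:
  fixes M :: "'a measure" and X :: "int \<Rightarrow> 'a \<Rightarrow> real" and gU :: "int \<Rightarrow> real"
  assumes lam: "0 < lam" "lam < pi" and ws: "weakly_stationary M X"
    and sU: "spectral_density gU fU" and sX: "spectral_density (autocov M X) (f_delta fU lam \<delta>)"
    and d: "0 < \<delta>" "\<delta> < 1" and sm: "(\<lambda>k. \<bar>gU k\<bar>) summable_on UNIV"
    and fin: "finite A" and c: "\<And>t. t \<in> A \<Longrightarrow> \<bar>c t\<bar> \<le> 1"
  shows "\<bar>\<Sum>s\<in>A. \<Sum>t\<in>A. c s * c t * autocov M X (t - s)\<bar>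
          \<le> real (card A) * (infsum (\<lambda>k. \<bar>gU k\<bar>) UNIV / (sin lam)^2) / \<delta>^2"
proof -
  define g where "g = autocov M X"
  define r where "r = 1 - \<delta>"
  have r: "0 \<le> r" "r < 1" using d by (auto simp: r_def)
  have B: "\<bar>g k\<bar> \<le> g 0" for k unfolding g_def by (rule ws_bounded[OF ws])
  have rec: "gU k = (1 + (2*r*cos lam)^2 + (r^2)^2) * g k
                 - 2*r*cos lam * (1 + r^2) * (g (k+1) + g (k-1)) + r^2 * (g (k+2) + g (k-2))" for k
    unfolding r_def g_def by (rule recurrence[OF sU sX d])
  have repr: "(\<lambda>m'. psi r lam m' * (\<Sum>m. psi r lam m * gU (k - int m' + int m))) sums g k" for k
    by (rule gamma_repr[OF lam r B rec])
  define P where "P = (\<Sum>m. \<bar>psi r lam m\<bar>)"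
  define G where "G = infsum (\<lambda>k. \<bar>gU k\<bar>) UNIV"
  have G0: "G \<ge> 0" unfolding G_def by (rule infsum_nonneg) auto
  have s: "sin lam > 0" using lam sin_gt_zero by blast
  have P0: "P \<ge> 0" unfolding P_def using psi_summable(1)[OF lam r] by (intro suminf_nonneg) auto
  have Pb: "P \<le> 1 / (\<delta> * sin lam)" unfolding P_def using psi_summable(2)[OF lam r] by (simp add: r_def)
  have q: "\<bar>\<Sum>s\<in>A. \<Sum>t\<in>A. c s * c t * g (t - s)\<bar> \<le> P * (P * (real (card A) * G))"
    unfolding P_def G_def by (rule quad_bound[OF lam r repr sm fin c])
  have X0: "real (card A) * G \<ge> 0" using G0 by simp
  have "P * (P * (real (card A) * G)) \<le> (1 / (\<delta> * sin lam)) * ((1 / (\<delta> * sin lam)) * (real (card A) * G))"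
    using P0 Pb X0 G0 d s by (intro mult_mono) (auto intro: mult_nonneg_nonneg)
  also have "\<dots> = real (card A) * (G / (sin lam)^2) / \<delta>^2"
    by (simp add: field_simps power2_eq_square)
  finally show ?thesis using q unfolding g_def G_def by linarith
qed

lemma count_pairs:
  fixes H :: int
  assumes "0 \<le> H" "H < int n"
  shows "(\<Sum>s\<in>{1..int n}. \<Sum>t\<in>{1..int n}. if t = s + H - int n then (1::real) else 0) = of_int H"
proof -
  have "(\<Sum>s\<in>{1..int n}. \<Sum>t\<in>{1..int n}. if t = s + H - int n then (1::real) else 0)
      = (\<Sum>s\<in>{1..int n}. if s + H - int n \<in> {1..int n} then (1::real) else 0)"
    by (intro sum.cong refl) (simp add: sum.delta')
  also have "\<dots> = (\<Sum>s\<in>{s\<in>{1..int n}. s + H - int n \<in> {1..int n}}. (1::real))"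
    by (rule sum.inter_filter[symmetric]) simp
  also have "{s\<in>{1..int n}. s + H - int n \<in> {1..int n}} = {int n - H + 1..int n}"
    using assms by auto
  finally show ?thesis using assms by simp
qed

theorem proposition1:
  fixes lam0 :: real and fU :: "real \<Rightarrow> real"
    and MU :: "'b measure" and U :: "int \<Rightarrow> 'b \<Rightarrow> real"
    and M :: "real \<Rightarrow> 'a measure" and X :: "real \<Rightarrow> int \<Rightarrow> 'a \<Rightarrow> real"
    and h :: int
  assumes "0 < lam0" and "lam0 < pi"
    and "weakly_stationary MU U"
    and "(\<lambda>k. \<bar>autocov MU U k\<bar>) summable_on UNIV"
    and "spectral_density (autocov MU U) fU"
    and "continuous_on {0..pi} fU"
    and "(INF l\<in>{0..pi}. fU l) > 0"
    and "\<forall>\<delta>\<in>{0<..<1}. weakly_stationary (M \<delta>) (X \<delta>) \<and>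
           spectral_density (autocov (M \<delta>) (X \<delta>)) (f_delta fU lam0 \<delta>)"
  shows "\<forall>e>0. \<exists>C n0. \<forall>n\<ge>n0. \<forall>\<delta>\<in>{0<..<1}.
           measure (M \<delta>) {\<omega>\<in>space (M \<delta>).
              \<bar>gamma_hat n (X \<delta>) h \<omega> - gamma_tilde n (X \<delta>) h \<omega>\<bar> > C / (real n * \<delta>^2)} < e"
proof (intro allI impI)
  fix e :: real assume e: "e > 0"
  note lam = assms(1,2)
  note sm = assms(4)
  note sU = assms(5)
  define G where "G = infsum (\<lambda>k. \<bar>autocov MU U k\<bar>) UNIV"
  have G0: "G \<ge> 0" unfolding G_def by (rule infsum_nonneg) auto
  define K where "K = G / (sin lam0)^2"
  have K0: "K \<ge> 0" unfolding K_def using G0 by simp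
  define H where "H = \<bar>h\<bar>"
  have H0: "H \<ge> 0" unfolding H_def by simp
  define C where "C = (2 * (of_int H + 2) * K + 1) / e"
  have C0: "C > 0" unfolding C_def using e K0 H0 by (intro divide_pos_pos) (auto intro: add_nonneg_pos)
  show "\<exists>C n0. \<forall>n\<ge>n0. \<forall>\<delta>\<in>{0<..<1}.
           measure (M \<delta>) {\<omega>\<in>space (M \<delta>).
              \<bar>gamma_hat n (X \<delta>) h \<omega> - gamma_tilde n (X \<delta>) h \<omega>\<bar> > C / (real n * \<delta>^2)} < e"
  proof (intro exI[of _ C] exI[of _ "nat H + 1"] allI impI ballI)
    fix n :: nat and \<delta> :: real
    assume n: "n \<ge> nat H + 1" and d: "\<delta> \<in> {0<..<1}"
    have d0: "0 < \<delta>" "\<delta> < 1" using d by auto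
    have ws: "weakly_stationary (M \<delta>) (X \<delta>)" and sX: "spectral_density (autocov (M \<delta>) (X \<delta>)) (f_delta fU lam0 \<delta>)"
      using assms(8) d by auto
    interpret P: prob_space "M \<delta>" by (rule ws_prob[OF ws])
    have n1: "n \<ge> 1" using n by simp
    have Hn: "H < int n" using n H0 by linarith
    have hn: "\<bar>h\<bar> < int n" using Hn unfolding H_def .
    define A where "A = {1..int n}"
    have cardA: "card A = n" unfolding A_def by simp
    define g where "g = autocov (M \<delta>) (X \<delta>)"
    have quad: "\<bar>\<Sum>s\<in>B. \<Sum>t\<in>B. c s * c t * g (t - s)\<bar> \<le> real (card B) * K / \<delta>^2"
      if "finite B" "\<And>t. t \<in> B \<Longrightarrow> \<bar>c t\<bar> \<le> 1" for B c
      using quad_delta[OF lam ws sU sX d0 sm that] unfolding g_def K_def G_def by simp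
    have g0: "g 0 \<le> K / \<delta>^2"
      using quad[of "{0}" "\<lambda>_. 1"] by simp
    define ind where "ind s t = (if t = s + H - int n then (1::real) else 0)" for s t
    define c1 where "c1 t = (1::real)" for t :: int
    define cc where "cc t = cos (pi * of_int t)" for t :: int
    define B1 where "B1 \<omega> = (\<Sum>s\<in>A. \<Sum>t\<in>A. ind s t * \<bar>X \<delta> s \<omega> * X \<delta> t \<omega>\<bar>)" for \<omega>
    define B2 where "B2 \<omega> = (\<Sum>t\<in>A. c1 t * X \<delta> t \<omega>)^2" for \<omega>
    define B3 where "B3 \<omega> = (\<Sum>t\<in>A. cc t * X \<delta> t \<omega>)^2" for \<omega>
    define Bf where "Bf \<omega> = B1 \<omega> / real n + B2 \<omega> / real n ^ 2 + B3 \<omega> / real n ^ 2" for \<omega>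
    have iB1: "integrable (M \<delta>) B1"
      unfolding B1_def by (auto intro!: integrable_sum simp: ws_abs_prod_int[OF ws])
    have iB2: "integrable (M \<delta>) B2" unfolding B2_def by (rule ws_quad_int[OF ws])
    have iB3: "integrable (M \<delta>) B3" unfolding B3_def by (rule ws_quad_int[OF ws])
    have iBf: "integrable (M \<delta>) Bf" unfolding Bf_def
      by (intro Bochner_Integration.integrable_add integrable_divide iB1 iB2 iB3)
    have Bf0: "Bf \<omega> \<ge> 0" for \<omega>
      unfolding Bf_def B1_def B2_def B3_def ind_def
      by (intro add_nonneg_nonneg divide_nonneg_nonneg sum_nonneg) auto
    have EB1: "(\<integral>\<omega>. B1 \<omega> \<partial>M \<delta>) \<le> of_int H * (K / \<delta>^2)"
    proof -
      have "(\<integral>\<omega>. B1 \<omega> \<partial>M \<delta>) = (\<Sum>s\<in>A. \<Sum>t\<in>A. ind s t * (\<integral>\<omega>. \<bar>X \<delta> s \<omega> * X \<delta> t \<omega>\<bar> \<partial>M \<delta>))"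
        unfolding B1_def
        by (simp add: integral_sum integrable_sum ws_abs_prod_int[OF ws])
      also have "\<dots> \<le> (\<Sum>s\<in>A. \<Sum>t\<in>A. ind s t * (K / \<delta>^2))"
      proof (intro sum_mono mult_left_mono)
        fix s t
        show "(\<integral>\<omega>. \<bar>X \<delta> s \<omega> * X \<delta> t \<omega>\<bar> \<partial>M \<delta>) \<le> K / \<delta>^2"
          using ws_abs_prod[OF ws, of s t] g0 unfolding g_def by linarith
        show "0 \<le> ind s t" unfolding ind_def by simp
      qed
      also have "\<dots> = (\<Sum>s\<in>A. \<Sum>t\<in>A. ind s t) * (K / \<delta>^2)"
        by (simp only: sum_distrib_right)
      also have "(\<Sum>s\<in>A. \<Sum>t\<in>A. ind s t) = of_int H"
        unfolding A_def ind_def by (rule count_pairs[OF H0 Hn])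
      finally show ?thesis .
    qed
    have EB2: "(\<integral>\<omega>. B2 \<omega> \<partial>M \<delta>) \<le> real n * K / \<delta>^2"
    proof -
      have "(\<integral>\<omega>. B2 \<omega> \<partial>M \<delta>) = (\<Sum>s\<in>A. \<Sum>t\<in>A. c1 s * c1 t * g (t - s))"
        unfolding B2_def g_def by (rule ws_quad[OF ws])
      also have "\<dots> \<le> \<bar>\<Sum>s\<in>A. \<Sum>t\<in>A. c1 s * c1 t * g (t - s)\<bar>" by simp
      also have "\<dots> \<le> real n * K / \<delta>^2"
        using quad[of A c1] cardA unfolding A_def c1_def by simp
      finally show ?thesis .
    qed
    have EB3: "(\<integral>\<omega>. B3 \<omega> \<partial>M \<delta>) \<le> real n * K / \<delta>^2"
    proof -
      have "(\<integral>\<omega>. B3 \<omega> \<partial>M \<delta>) = (\<Sum>s\<in>A. \<Sum>t\<in>A. cc s * cc t * g (t - s))"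
        unfolding B3_def g_def by (rule ws_quad[OF ws])
      also have "\<dots> \<le> \<bar>\<Sum>s\<in>A. \<Sum>t\<in>A. cc s * cc t * g (t - s)\<bar>" by simp
      also have "\<dots> \<le> real n * K / \<delta>^2"
        using quad[of A cc] cardA unfolding A_def cc_def by simp
      finally show ?thesis .
    qed
    have EBf: "(\<integral>\<omega>. Bf \<omega> \<partial>M \<delta>) \<le> (of_int H + 2) * K / (real n * \<delta>^2)"
    proof -
      have "(\<integral>\<omega>. Bf \<omega> \<partial>M \<delta>) = (\<integral>\<omega>. B1 \<omega> \<partial>M \<delta>) / real n + (\<integral>\<omega>. B2 \<omega> \<partial>M \<delta>) / real n ^ 2 + (\<integral>\<omega>. B3 \<omega> \<partial>M \<delta>) / real n ^ 2"
        unfolding Bf_def using iB1 iB2 iB3 by simp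
      also have "\<dots> \<le> (of_int H * (K / \<delta>^2)) / real n + (real n * K / \<delta>^2) / real n ^ 2 + (real n * K / \<delta>^2) / real n ^ 2"
        using EB1 EB2 EB3 n1 by (intro add_mono divide_right_mono) auto
      also have "\<dots> = (of_int H + 2) * K / (real n * \<delta>^2)"
        using n1 d0 by (simp add: field_simps power2_eq_square)
      finally show ?thesis .
    qed
    have Dle: "\<bar>gamma_hat n (X \<delta>) h \<omega> - gamma_tilde n (X \<delta>) h \<omega>\<bar> \<le> Bf \<omega>" for \<omega>
    proof -
      define x where "x t = X \<delta> t \<omega>" for t
      define T1 where "T1 = (\<Sum>s\<in>A. \<Sum>t\<in>A. if t = s + H - int n then x s * x t else 0)"
      define ev :: real where "ev = (if even n then 1 else 0)"
      have id: "gamma_hat n (X \<delta>) h \<omega> - gamma_tilde n (X \<delta>) h \<omega> =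
          (1 / real n) * T1 - B2 \<omega> / real n ^ 2 + ev * cos (pi * of_int h) * B3 \<omega> / real n ^ 2"
        using dft_identity[OF n1 hn, of "X \<delta>" \<omega>]
        unfolding T1_def B2_def B3_def x_def A_def H_def ev_def c1_def cc_def by simp
      have T1b: "\<bar>T1\<bar> \<le> B1 \<omega>"
      proof -
        have "\<bar>T1\<bar> \<le> (\<Sum>s\<in>A. \<Sum>t\<in>A. \<bar>if t = s + H - int n then x s * x t else 0\<bar>)"
          unfolding T1_def by (rule order.trans[OF sum_abs sum_mono[OF sum_abs]])
        also have "\<dots> = B1 \<omega>" unfolding B1_def ind_def x_def by (intro sum.cong refl) auto
        finally show ?thesis .
      qed
      have B20: "B2 \<omega> \<ge> 0" and B30: "B3 \<omega> \<ge> 0" unfolding B2_def B3_def by auto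
      have evc: "\<bar>ev * cos (pi * of_int h)\<bar> \<le> 1"
        unfolding ev_def by (auto simp: abs_cos_le_one)
      have "\<bar>ev * cos (pi * of_int h) * B3 \<omega> / real n ^ 2\<bar> \<le> B3 \<omega> / real n ^ 2"
      proof -
        have "\<bar>ev * cos (pi * of_int h) * B3 \<omega>\<bar> = \<bar>ev * cos (pi * of_int h)\<bar> * B3 \<omega>"
          using B30 by (simp only: abs_mult abs_of_nonneg)
        also have "\<dots> \<le> 1 * B3 \<omega>" by (rule mult_right_mono[OF evc B30])
        finally have *: "\<bar>ev * cos (pi * of_int h) * B3 \<omega>\<bar> \<le> 1 * B3 \<omega>" .
        have "\<bar>ev * cos (pi * of_int h) * B3 \<omega> / real n ^ 2\<bar> = \<bar>ev * cos (pi * of_int h) * B3 \<omega>\<bar> / real n ^ 2"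
          by (simp only: abs_divide power_abs abs_of_nat)
        also have "\<dots> \<le> (1 * B3 \<omega>) / real n ^ 2"
          by (rule divide_right_mono[OF *]) simp
        finally show ?thesis by simp
      qed
      moreover have "\<bar>(1 / real n) * T1\<bar> \<le> B1 \<omega> / real n"
        using T1b n1 by (simp add: abs_mult divide_right_mono)
      moreover have "\<bar>B2 \<omega> / real n ^ 2\<bar> = B2 \<omega> / real n ^ 2" using B20 by simp
      ultimately show ?thesis unfolding id Bf_def by linarith
    qed
    define a where "a = C / (real n * \<delta>^2)"
    have a0: "a > 0" unfolding a_def using C0 n1 d0 by simp
    have sub: "{\<omega>\<in>space (M \<delta>). \<bar>gamma_hat n (X \<delta>) h \<omega> - gamma_tilde n (X \<delta>) h \<omega>\<bar> > a}
        \<subseteq> {\<omega>\<in>space (M \<delta>). Bf \<omega> \<ge> a}"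
      using Dle by (auto intro: order.trans[OF less_imp_le])
    have Bfm: "Bf \<in> borel_measurable (M \<delta>)" using iBf by (rule borel_measurable_integrable)
    have setm: "{\<omega>\<in>space (M \<delta>). Bf \<omega> \<ge> a} \<in> sets (M \<delta>)" using Bfm by measurable
    have "measure (M \<delta>) {\<omega>\<in>space (M \<delta>). \<bar>gamma_hat n (X \<delta>) h \<omega> - gamma_tilde n (X \<delta>) h \<omega>\<bar> > a}
        \<le> measure (M \<delta>) {\<omega>\<in>space (M \<delta>). Bf \<omega> \<ge> a}"
      by (rule P.finite_measure_mono[OF sub setm])
    also have "\<dots> \<le> (\<integral>\<omega>. Bf \<omega> \<partial>M \<delta>) / a"
      by (rule integral_Markov_inequality_measure[OF iBf _ _ a0, where A = "space (M \<delta>)"]) (auto simp: Bf0)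
    also have "\<dots> \<le> ((of_int H + 2) * K / (real n * \<delta>^2)) / a"
      using EBf a0 by (intro divide_right_mono) auto
    also have "\<dots> = (of_int H + 2) * K / C"
      unfolding a_def using n1 d0 C0 by (simp add: field_simps)
    also have "\<dots> < e"
    proof -
      define Z where "Z = (of_int H + 2) * K"
      have Z0: "Z \<ge> 0" unfolding Z_def using H0 K0 by simp
      have Ceq: "C = (2 * Z + 1) / e" unfolding C_def Z_def by (simp add: algebra_simps)
      have "Z / C = Z * e / (2 * Z + 1)" unfolding Ceq using e Z0 by (simp add: field_simps)
      also have "\<dots> < e"
      proof (subst pos_divide_less_eq)
        show "0 < 2 * Z + 1" using Z0 by simp
        have "0 \<le> Z * e" using e Z0 by simp
        then show "Z * e < e * (2 * Z + 1)" using e by (simp add: algebra_simps)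
      qed
      finally show ?thesis unfolding Z_def .
    qed
    finally show "measure (M \<delta>) {\<omega>\<in>space (M \<delta>).
              \<bar>gamma_hat n (X \<delta>) h \<omega> - gamma_tilde n (X \<delta>) h \<omega>\<bar> > C / (real n * \<delta>^2)} < e"
      unfolding a_def .
  qed
qed

end
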